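(* Let $\Pi_1=\{w\in\mathbb C^2:\operatorname{Im}(w_1+w_2)=0\}$ and $\Pi_2=\{w\in\mathbb C^2:\operatorname{Im}(w_1-w_2)=0\}$, and let $F(w_1,w_2)=(w_1,w_2^2)$. Then $F^{-1}(\Gamma)=\Pi_1\cup\Pi_2$ where $\Gamma=\{\operatorname{Im}(z_1+\sqrt{z_2})=0\}\cup\{\operatorname{Im}(z_1-\sqrt{z_2})=0\}$, and every neighbourhood of $0$ in $\mathbb C^2$ contains a neighbourhood of $0$ that is filled by a continuous family of holomorphic discs with boundaries in $\Pi_1\cup\Pi_2$, contracting to $0$.
   Context: A holomorphic disc is a map from the closed unit disc continuous up to the boundary and holomorphic in the interior; its boundary is the image of the unit circle. *)

theory Defs
  imports "HOL-Analysis.Analysis"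
begin

definition Pi1 :: "(complex \<times> complex) set" where
  "Pi1 = {w. Im (fst w + snd w) = 0}"

definition Pi2 :: "(complex \<times> complex) set" where
  "Pi2 = {w. Im (fst w - snd w) = 0}"

definition Fmap :: "complex \<times> complex \<Rightarrow> complex \<times> complex" where
  "Fmap w = (fst w, (snd w)\<^sup>2)"

text \<open>Gamma, using the principal square root; both signs are taken, so the
  choice of branch of the square root is immaterial.\<close>
definition Gamma :: "(complex \<times> complex) set" where
  "Gamma = {z. Im (fst z + csqrt (snd z)) = 0} \<union> {z. Im (fst z - csqrt (snd z)) = 0}"

definition holo_disc :: "(complex \<Rightarrow> complex \<times> complex) \<Rightarrow> bool" where
  "holo_disc f \<longleftrightarrow> continuous_on (cball 0 1) f
      \<and> (\<lambda>z. fst (f z)) holomorphic_on ball 0 1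
      \<and> (\<lambda>z. snd (f z)) holomorphic_on ball 0 1"

text \<open>V is filled by a continuous family of holomorphic discs (parametrised by a
  path-connected parameter set P) with boundaries in E, which contracts to 0:
  the union of the discs is exactly V, the family depends continuously on the
  parameter and the disc variable jointly, and the family contains the constant
  disc at 0 (so every disc can be deformed within the family to the point 0).\<close>
definition filled_by_contracting_discs ::
    "(complex \<times> complex) set \<Rightarrow> (complex \<times> complex) set \<Rightarrow> bool" where
  "filled_by_contracting_discs V E \<longleftrightarrow>
     (\<exists>(P :: (complex \<times> complex) set) (\<Phi> :: (complex \<times> complex) \<Rightarrow> complex \<Rightarrow> complex \<times> complex) p0.
        path_connected P \<and> p0 \<in> P \<and>
        continuous_on (P \<times> cball 0 1) (\<lambda>(p, \<zeta>). \<Phi> p \<zeta>) \<and>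
        (\<forall>p\<in>P. holo_disc (\<Phi> p)) \<and>
        (\<forall>p\<in>P. \<Phi> p ` sphere 0 1 \<subseteq> E) \<and>
        (\<forall>\<zeta>\<in>cball 0 1. \<Phi> p0 \<zeta> = 0) \<and>
        V = (\<Union>p\<in>P. \<Phi> p ` cball 0 1))"

end

theory Submission
  imports Defs
begin

lemma isCont_csqrt_ok: assumes "z \<notin> \<real>\<^sub>\<le>\<^sub>0 \<or> z = 0" shows "isCont csqrt z"
proof (cases "z = 0")
  case True
  have "isCont (\<lambda>x::complex. sqrt (norm x)) 0"
    by (intro continuous_intros)
  then have "((\<lambda>x::complex. sqrt (norm x)) \<longlongrightarrow> sqrt (norm (0::complex))) (at 0)"
    by (simp add: isCont_def)
  then have "((\<lambda>x. norm (csqrt x)) \<longlongrightarrow> 0) (at 0)" by simp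
  then have "(csqrt \<longlongrightarrow> 0) (at 0)" by (rule tendsto_norm_zero_cancel)
  then show ?thesis using True by (simp add: isCont_def)
next
  case False
  then show ?thesis using continuous_at_csqrt assms by blast
qed

lemma csqrt_scale: assumes "t \<ge> 0" shows "csqrt (of_real t * z) = of_real (sqrt t) * csqrt z"
proof (cases "t = 0")
  case True then show ?thesis by simp
next
  case False
  then have tp: "sqrt t > 0" using assms by simp
  show ?thesis
  proof (rule csqrt_unique)
    have "(of_real (sqrt t) :: complex)\<^sup>2 = of_real ((sqrt t)\<^sup>2)" by simp
    also have "\<dots> = of_real t" using assms by simp
    finally show "(of_real (sqrt t) * csqrt z)\<^sup>2 = of_real t * z"
      by (simp add: power_mult_distrib)
    show "0 < Re (of_real (sqrt t) * csqrt z) \<or> Re (of_real (sqrt t) * csqrt z) = 0 \<and> 0 \<le> Im (of_real (sqrt t) * csqrt z)"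
      using csqrt_principal[of z] tp by (auto simp del: csqrt.sel)
  qed
qed

definition sg :: "complex \<Rightarrow> complex" where
  "sg z = csqrt (\<i> * (1 - z)) / (csqrt (\<i> * (1 - z)) + csqrt (1 + z))"

lemma den_abs:
  fixes a b z :: complex
  assumes "a\<^sup>2 = \<i> * (1 - z)" "b\<^sup>2 = 1 + z" "Re a \<ge> 0" "Re b \<ge> 0" "a + b = 0"
  shows False
proof -
  have "b = -a" using assms(5) by (simp add: eq_neg_iff_add_eq_0 add.commute)
  then have "Re b = 0" using assms(3,4) by simp
  have "a\<^sup>2 = b\<^sup>2" using \<open>b = -a\<close> by simp
  then have "\<i> * (1 - z) = 1 + z" using assms by simp
  then have "Re z = 0" "Im z = 1" by (auto simp: complex_eq_iff)
  moreover have "Im (b\<^sup>2) = 2 * Re b * Im b" by (simp add: power2_eq_square)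
  ultimately show False using assms(2) \<open>Re b = 0\<close> by simp
qed

lemma sg_den: "csqrt (\<i> * (1 - z)) + csqrt (1 + z) \<noteq> 0"
  using den_abs[of "csqrt (\<i> * (1 - z))" z "csqrt (1 + z)"] by (metis power2_csqrt Re_csqrt)

lemma cball_sq: "cmod z \<le> 1 \<Longrightarrow> (Re z)\<^sup>2 + (Im z)\<^sup>2 \<le> 1"
  by (metis cmod_power2 norm_ge_zero power_le_one)

lemma ball_sq: assumes "cmod z < 1" shows "(Re z)\<^sup>2 + (Im z)\<^sup>2 < 1"
proof -
  have "(cmod z)\<^sup>2 < 1\<^sup>2" using assms by (intro power_strict_mono) auto
  then show ?thesis by (simp add: cmod_power2)
qed

lemma sq_aux: fixes x y :: real assumes "x\<^sup>2 + y\<^sup>2 \<le> 1" "x \<ge> 1 \<or> x \<le> -1" shows "y = 0" "x = 1 \<or> x = -1"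
proof -
  have "x\<^sup>2 \<ge> 1" using assms(2) by (metis abs_le_square_iff abs_minus_cancel abs_of_nonneg abs_real_def le_minus_iff one_power2 order.trans zero_le_one)
  then have "y\<^sup>2 \<le> 0" using assms(1) by linarith
  then show "y = 0" by simp
  then have "x\<^sup>2 = 1" using assms(1) \<open>x\<^sup>2 \<ge> 1\<close> by simp
  then show "x = 1 \<or> x = -1" by (simp add: power2_eq_1_iff)
qed

lemma memA: assumes "cmod z \<le> 1" shows "\<i> * (1 - z) \<notin> \<real>\<^sub>\<le>\<^sub>0 \<or> \<i> * (1 - z) = 0"
proof (cases "\<i> * (1 - z) \<in> \<real>\<^sub>\<le>\<^sub>0")
  case True
  then have r: "Re z = 1" by (auto simp: complex_nonpos_Reals_iff)
  have "(Re z)\<^sup>2 + (Im z)\<^sup>2 \<le> 1" using cball_sq assms by blast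
  then have "Im z = 0" using sq_aux(1) r by simp
  with r show ?thesis by (simp add: complex_eq_iff)
qed simp

lemma memB: assumes "cmod z \<le> 1" shows "1 + z \<notin> \<real>\<^sub>\<le>\<^sub>0 \<or> 1 + z = 0"
proof (cases "1 + z \<in> \<real>\<^sub>\<le>\<^sub>0")
  case True
  then have r: "Re z \<le> -1" by (auto simp: complex_nonpos_Reals_iff)
  have q: "(Re z)\<^sup>2 + (Im z)\<^sup>2 \<le> 1" using cball_sq assms by blast
  then have "Im z = 0" "Re z = -1" using sq_aux[OF q] r by auto
  then show ?thesis by (simp add: complex_eq_iff)
qed simp

lemma cont_csqrt_S: "continuous_on {w. w \<notin> \<real>\<^sub>\<le>\<^sub>0 \<or> w = 0} csqrt"
  by (intro continuous_at_imp_continuous_on ballI isCont_csqrt_ok) auto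

lemma sg_cont: "continuous_on (cball 0 1) sg"
proof -
  have a: "continuous_on (cball 0 1) (\<lambda>z. csqrt (\<i> * (1 - z)))"
    by (rule continuous_on_compose2[OF cont_csqrt_S]) (intro continuous_intros, use memA in \<open>force simp: image_subset_iff\<close>)
  have b: "continuous_on (cball 0 1) (\<lambda>z. csqrt (1 + z))"
    by (rule continuous_on_compose2[OF cont_csqrt_S]) (intro continuous_intros, use memB in \<open>force simp: image_subset_iff\<close>)
  show ?thesis unfolding sg_def
    by (intro continuous_intros a b) (use sg_den in blast)
qed

lemma sg_holo: "sg holomorphic_on ball 0 1"
proof -
  have h1: "\<i> * (1 - z) \<notin> \<real>\<^sub>\<le>\<^sub>0" and h2: "1 + z \<notin> \<real>\<^sub>\<le>\<^sub>0" if "z \<in> ball 0 1" for z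
  proof -
    from that have "cmod z < 1" by simp
    then have "Re z < 1" "Re z > -1" using abs_Re_le_cmod[of z] by linarith+
    then show "\<i> * (1 - z) \<notin> \<real>\<^sub>\<le>\<^sub>0" "1 + z \<notin> \<real>\<^sub>\<le>\<^sub>0"
      by (simp_all add: complex_nonpos_Reals_iff)
  qed
  have a: "(\<lambda>z. csqrt (\<i> * (1 - z))) holomorphic_on ball 0 1"
    by (rule holomorphic_on_csqrt') (auto intro!: holomorphic_intros h1)
  have b: "(\<lambda>z. csqrt (1 + z)) holomorphic_on ball 0 1"
    by (rule holomorphic_on_csqrt') (auto intro!: holomorphic_intros h2)
  show ?thesis unfolding sg_def
    by (intro holomorphic_intros a b) (use sg_den in blast)
qed

lemma sg_real: assumes "cmod z = 1" "Im z \<ge> 0" shows "Im (sg z) = 0"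
proof (cases "z = -1")
  case True
  have "csqrt (\<i> * (1 - z)) \<noteq> 0" using True by simp
  then have "sg z = 1" unfolding sg_def using True by simp
  then show ?thesis by simp
next
  case False
  have q: "(Re z)\<^sup>2 + (Im z)\<^sup>2 = 1" using assms(1) by (simp add: cmod_power2[symmetric])
  have "Re z > -1"
  proof (rule ccontr)
    assume "\<not> Re z > -1"
    then have "Im z = 0" "Re z = 1 \<or> Re z = -1" using sq_aux[of "Re z" "Im z"] q by auto
    then have "z = -1" using \<open>\<not> Re z > -1\<close> by (auto simp: complex_eq_iff)
    then show False using False by simp
  qed
  define t where "t = Im z / (1 + Re z)"
  have t0: "t \<ge> 0" unfolding t_def using assms(2) \<open>Re z > -1\<close> by simp
  have "\<i> * (1 - z) = of_real t * (1 + z)"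
  proof (rule complex_eqI)
    show "Re (\<i> * (1 - z)) = Re (of_real t * (1 + z))"
      using \<open>Re z > -1\<close> by (simp add: t_def field_simps)
    have "1 - Re z = Im z * Im z / (1 + Re z)"
      using \<open>Re z > -1\<close> q by (simp add: field_simps power2_eq_square)
    then show "Im (\<i> * (1 - z)) = Im (of_real t * (1 + z))"
      by (simp add: t_def)
  qed
  then have e: "csqrt (\<i> * (1 - z)) = of_real (sqrt t) * csqrt (1 + z)"
    using csqrt_scale[OF t0] by simp
  have nz: "csqrt (1 + z) \<noteq> 0" using False by (simp add: add_eq_0_iff)
  have "sg z = (of_real (sqrt t) * csqrt (1 + z)) / ((of_real (sqrt t) + 1) * csqrt (1 + z))"
    unfolding sg_def e by (simp add: algebra_simps)
  also have "\<dots> = of_real (sqrt t) / (of_real (sqrt t) + 1)"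
    using nz by (rule mult_divide_mult_cancel_right)
  also have "\<dots> = of_real (sqrt t / (sqrt t + 1))" by simp
  finally show ?thesis by simp
qed

lemma Im_csqrt_nonneg: assumes "Im w \<ge> 0" shows "Im (csqrt w) \<ge> 0"
proof -
  have "Im ((csqrt w)\<^sup>2) = 2 * Re (csqrt w) * Im (csqrt w)" by (simp add: power2_eq_square)
  then have "2 * Re (csqrt w) * Im (csqrt w) \<ge> 0" using assms by simp
  show ?thesis
  proof (cases "Re (csqrt w) > 0")
    case True
    then have "2 * Re (csqrt w) > 0" by simp
    then show ?thesis using \<open>2 * Re (csqrt w) * Im (csqrt w) \<ge> 0\<close>
      by (simp add: zero_le_mult_iff)
  next
    case False
    then show ?thesis using csqrt_principal[of w] by linarith
  qed
qed

lemma Re_sq_csqrt: assumes "Re w \<ge> 0" shows "(Im (csqrt w))\<^sup>2 \<le> (Re (csqrt w))\<^sup>2"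
proof -
  have "Re ((csqrt w)\<^sup>2) = (Re (csqrt w))\<^sup>2 - (Im (csqrt w))\<^sup>2" by (simp add: power2_eq_square)
  then have "Re w = (Re (csqrt w))\<^sup>2 - (Im (csqrt w))\<^sup>2" by (simp only: power2_csqrt)
  then show ?thesis using assms by linarith
qed

lemma lin_aux: fixes P Q R S T U :: real
  assumes "R \<le> Q" "T \<le> 2 * (U + R)" "S \<le> P" "U \<le> P" "0 \<le> P" "0 \<le> Q"
  shows "S + T \<le> 4 * (P + Q)" using assms by (smt (verit))

lemma poly_ineq:
  fixes a1 a2 b1 b2 :: real
  assumes "a1 \<ge> 0" "a2 \<ge> 0" "b1 \<ge> 0" "b2\<^sup>2 \<le> b1\<^sup>2"
  shows "a1\<^sup>2 + a2\<^sup>2 \<le> 4 * ((a1 + b1)\<^sup>2 + (a2 + b2)\<^sup>2)"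
proof -
  have "\<bar>b2\<bar> \<le> b1" using assms(3,4) by (metis abs_of_nonneg real_sqrt_abs real_sqrt_le_mono)
  then have bb: "b2 \<ge> - b1" by linarith
  have s1: "(a1 + b1)\<^sup>2 \<ge> a1\<^sup>2" "(a1 + b1)\<^sup>2 \<ge> b1\<^sup>2" using assms by (simp_all add: power_mono)
  show ?thesis
  proof (cases "a2 \<ge> b1")
    case True
    then have "a2 + b2 \<ge> a2 - b1" "a2 - b1 \<ge> 0" using bb by simp_all
    then have "(a2 + b2)\<^sup>2 \<ge> (a2 - b1)\<^sup>2" by (simp add: power_mono)
    moreover have "2 * (b1\<^sup>2 + (a2 - b1)\<^sup>2) \<ge> a2\<^sup>2"
    proof -
      have "2 * (b1\<^sup>2 + (a2 - b1)\<^sup>2) - a2\<^sup>2 = (2 * b1 - a2)\<^sup>2" by (simp add: power2_eq_square algebra_simps)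
      then show ?thesis using zero_le_power2[of "2 * b1 - a2"] by linarith
    qed
    ultimately show ?thesis using s1 zero_le_power2[of "a1+b1"] zero_le_power2[of "a2+b2"] by (rule lin_aux)
  next
    case False
    then have "a2\<^sup>2 \<le> b1\<^sup>2" using assms by (simp add: power_mono)
    then show ?thesis using s1 zero_le_power2[of "a2+b2"] zero_le_power2[of "a1+b1"] zero_le_power2[of "a1"] by (smt (verit))
  qed
qed

lemma sg_bound: assumes "cmod z \<le> 1" shows "cmod (sg z) \<le> 2"
proof -
  define a where "a = csqrt (\<i> * (1 - z))"
  define b where "b = csqrt (1 + z)"
  have "Re z \<le> 1" "Re z \<ge> -1" using assms abs_Re_le_cmod[of z] by linarith+
  have "Im (\<i> * (1 - z)) \<ge> 0" "Re (1 + z) \<ge> 0" using \<open>Re z \<le> 1\<close> \<open>Re z \<ge> -1\<close> by simp_all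
  then have a1: "Re a \<ge> 0" "Im a \<ge> 0" and b1: "Re b \<ge> 0" "(Im b)\<^sup>2 \<le> (Re b)\<^sup>2"
    unfolding a_def b_def using Re_csqrt Im_csqrt_nonneg Re_sq_csqrt by blast+
  have "(cmod a)\<^sup>2 \<le> (2 * cmod (a + b))\<^sup>2"
    using poly_ineq[OF a1 b1] by (simp add: cmod_power2 power_mult_distrib)
  then have "cmod a \<le> 2 * cmod (a + b)" by (rule power2_le_imp_le) simp
  moreover have "a + b \<noteq> 0" unfolding a_def b_def by (rule sg_den)
  ultimately show ?thesis unfolding sg_def a_def[symmetric] b_def[symmetric]
    by (simp add: norm_divide divide_le_eq)
qed

lemma sg_nonreal: assumes "cmod z < 1" shows "Im (sg z) \<noteq> 0"
proof
  assume h: "Im (sg z) = 0"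
  define a where "a = csqrt (\<i> * (1 - z))"
  define b where "b = csqrt (1 + z)"
  have "z \<noteq> 1" using assms by auto
  then have a0: "a \<noteq> 0" unfolding a_def by simp
  have ab: "a + b \<noteq> 0" unfolding a_def b_def by (rule sg_den)
  define c where "c = Re (sg z)"
  have "sg z = of_real c" using h unfolding c_def by (simp add: complex_eq_iff)
  then have ac: "a = of_real c * (a + b)" using ab unfolding sg_def a_def[symmetric] b_def[symmetric]
    by (simp add: field_simps)
  then have c0: "c \<noteq> 0" using a0 by auto
  define r where "r = (1 - c) / c"
  from ac have "of_real c * b = (1 - of_real c) * a" by (simp add: algebra_simps)
  then have "b = (1 - of_real c) * a / of_real c" using c0 by (simp add: field_simps)
  then have "b = of_real r * a" unfolding r_def by simp
  then have "b\<^sup>2 = of_real (r\<^sup>2) * a\<^sup>2" by (simp add: power_mult_distrib)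
  then have e: "1 + z = of_real (r\<^sup>2) * (\<i> * (1 - z))" unfolding a_def b_def by simp
  define k where "k = r\<^sup>2"
  have e1: "1 + Re z = k * Im z" and e2: "Im z = k * (1 - Re z)"
    using e unfolding k_def[symmetric] by (auto simp: complex_eq_iff)
  have "(1 + Re z) * (1 - Re z) = Im z * Im z" using e1 e2 by (metis mult.assoc mult.commute)
  then have "(Re z)\<^sup>2 + (Im z)\<^sup>2 = 1" by (simp add: power2_eq_square algebra_simps)
  then show False using ball_sq[OF assms] by simp
qed

definition cf :: "complex \<Rightarrow> complex \<Rightarrow> complex" where
  "cf q \<tau> = of_real (Re q) + of_real (Im q / 2) * \<tau>"

definition Nn :: "complex \<Rightarrow> real" where
  "Nn q = \<bar>Re q\<bar> + \<bar>Im q\<bar>"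

definition inv\<tau> :: "complex \<Rightarrow> complex \<Rightarrow> complex" where
  "inv\<tau> \<tau> c = of_real (Re c - Im c * Re \<tau> / Im \<tau>) + \<i> * of_real (2 * Im c / Im \<tau>)"

lemma Re_cf: "Re (cf q \<tau>) = Re q + Im q / 2 * Re \<tau>" and Im_cf: "Im (cf q \<tau>) = Im q / 2 * Im \<tau>"
  by (simp_all add: cf_def)

lemma Re_inv: "Re (inv\<tau> \<tau> c) = Re c - Im c * Re \<tau> / Im \<tau>" and Im_inv: "Im (inv\<tau> \<tau> c) = 2 * Im c / Im \<tau>"
  by (simp_all add: inv\<tau>_def)

lemma cf_inv: "Im \<tau> \<noteq> 0 \<Longrightarrow> cf (inv\<tau> \<tau> c) \<tau> = c"
  by (rule complex_eqI) (simp_all add: Re_cf Im_cf Re_inv Im_inv field_simps)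

lemma inv_cf: "Im \<tau> \<noteq> 0 \<Longrightarrow> inv\<tau> \<tau> (cf q \<tau>) = q"
  by (rule complex_eqI) (simp_all add: Re_cf Im_cf Re_inv Im_inv field_simps)

lemma cf_bound: assumes "cmod \<tau> \<le> 2" shows "cmod (cf q \<tau>) \<le> Nn q"
proof -
  have "cmod (cf q \<tau>) \<le> cmod (of_real (Re q) :: complex) + cmod (of_real (Im q / 2) * \<tau>)"
    unfolding cf_def by (rule norm_triangle_ineq)
  also have "\<dots> = \<bar>Re q\<bar> + \<bar>Im q\<bar> / 2 * cmod \<tau>" by (simp add: norm_mult)
  also have "\<dots> \<le> \<bar>Re q\<bar> + \<bar>Im q\<bar> / 2 * 2"
    using assms by (intro add_left_mono mult_left_mono) auto
  finally show ?thesis by (simp add: Nn_def)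
qed

lemma cf_0 [simp]: "cf 0 \<tau> = 0" by (simp add: cf_def)

lemma comp_reduce:
  fixes \<tau> :: "complex \<Rightarrow> complex"
  assumes cont: "continuous_on (cball 0 1) \<tau>"
    and bnd: "\<And>\<zeta>. \<zeta> \<in> cball 0 1 \<Longrightarrow> cmod (\<tau> \<zeta>) \<le> 2"
    and nr: "\<And>\<zeta>. \<zeta> \<in> ball 0 1 \<Longrightarrow> Im (\<tau> \<zeta>) \<noteq> 0"
    and z: "z \<in> cball 0 1" and q: "Nn q < e"
  shows "eventually (\<lambda>r. \<exists>q'. Nn q' < e \<and> cf q' (\<tau> (of_real r * z)) = cf q (\<tau> z)) (at_left 1)"
proof (cases "Im (\<tau> z) = 0")
  case True
  define c where "c = cf q (\<tau> z)"
  have "Im c = 0" using True by (simp add: c_def Im_cf)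
  then have c: "c = of_real (Re c)" by (simp add: complex_eq_iff)
  have "\<bar>Re c\<bar> \<le> cmod c" by (rule abs_Re_le_cmod)
  also have "\<dots> \<le> Nn q" unfolding c_def using bnd z by (intro cf_bound) auto
  finally have "Nn (of_real (Re c)) < e" using q by (simp add: Nn_def)
  moreover have "cf (of_real (Re c)) \<tau>' = c" for \<tau>' using c \<open>Im c = 0\<close> by (simp add: cf_def)
  ultimately show ?thesis unfolding c_def[symmetric] by (intro always_eventually) blast
next
  case False
  define c where "c = cf q (\<tau> z)"
  define g where "g r = \<tau> (of_real r * z)" for r :: real
  have "continuous_on {0..1} g" unfolding g_def
  proof (rule continuous_on_compose2[OF cont])
    show "continuous_on {0..1} (\<lambda>r::real. of_real r * z)" by (intro continuous_intros)
    show "(\<lambda>r::real. of_real r * z) ` {0..1} \<subseteq> cball 0 1"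
    proof
      fix w assume "w \<in> (\<lambda>r::real. of_real r * z) ` {0..1}"
      then obtain r where r: "r \<in> {0..1}" "w = of_real r * z" by auto
      have "cmod w = r * cmod z" using r by (simp add: norm_mult)
      also have "\<dots> \<le> 1 * 1" using r z by (intro mult_mono) auto
      finally show "w \<in> cball 0 1" by simp
    qed
  qed
  then have gl: "(g \<longlongrightarrow> g 1) (at_left 1)" by (rule continuous_on_Icc_at_leftD) simp
  have g1: "g 1 = \<tau> z" by (simp add: g_def)
  have "((\<lambda>r. Nn (inv\<tau> (g r) c)) \<longlongrightarrow> Nn (inv\<tau> (g 1) c)) (at_left 1)"
    unfolding Nn_def Re_inv Im_inv using False g1
    by (intro tendsto_intros gl) simp_all
  moreover have "Nn (inv\<tau> (g 1) c) = Nn q" using False g1 by (simp add: c_def inv_cf)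
  ultimately have ev1: "eventually (\<lambda>r. Nn (inv\<tau> (g r) c) < e) (at_left 1)"
    using q by (simp add: order_tendstoD(2))
  have ev2: "eventually (\<lambda>r::real. 0 < r \<and> r < 1) (at_left 1)"
    using eventually_at_left_real[of 0 "1::real"] by simp
  show ?thesis
    using ev1 ev2
  proof eventually_elim
    case (elim r)
    have "r * cmod z \<le> r * 1" using z elim by (intro mult_left_mono) auto
    then have "r * cmod z < 1" using elim by linarith
    then have "cmod (of_real r * z) < 1"
      using elim by (simp add: norm_mult)
    then have "Im (g r) \<noteq> 0" unfolding g_def using nr by simp
    then have "cf (inv\<tau> (g r) c) (g r) = c" by (rule cf_inv)
    then show ?case using elim unfolding g_def c_def by blast
  qed
qed

definition Phi :: "complex \<times> complex \<Rightarrow> complex \<Rightarrow> complex \<times> complex" where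
  "Phi p \<zeta> = ((cf (fst p) (sg \<zeta>) + cf (snd p) (sg (-\<zeta>))) / 2,
               (cf (fst p) (sg \<zeta>) - cf (snd p) (sg (-\<zeta>))) / 2)"

definition PP :: "real \<Rightarrow> (complex \<times> complex) set" where
  "PP e = {p. Nn (fst p) < e \<and> Nn (snd p) < e}"

definition GG :: "complex \<Rightarrow> complex \<times> complex \<Rightarrow> complex \<times> complex" where
  "GG \<zeta> w = (inv\<tau> (sg \<zeta>) (fst w + snd w), inv\<tau> (sg (-\<zeta>)) (fst w - snd w))"

lemma Phi_sum: "fst (Phi p \<zeta>) + snd (Phi p \<zeta>) = cf (fst p) (sg \<zeta>)"
  and Phi_diff: "fst (Phi p \<zeta>) - snd (Phi p \<zeta>) = cf (snd p) (sg (-\<zeta>))"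
  by (simp_all add: Phi_def field_simps)

lemma GG_Phi: assumes "cmod \<zeta> < 1" shows "GG \<zeta> (Phi p \<zeta>) = p"
proof -
  have "Im (sg \<zeta>) \<noteq> 0" "Im (sg (-\<zeta>)) \<noteq> 0" using sg_nonreal assms by auto
  then show ?thesis unfolding GG_def Phi_sum Phi_diff by (simp add: inv_cf)
qed

lemma Phi_GG: assumes "cmod \<zeta> < 1" shows "Phi (GG \<zeta> w) \<zeta> = w"
proof -
  have "Im (sg \<zeta>) \<noteq> 0" "Im (sg (-\<zeta>)) \<noteq> 0" using sg_nonreal assms by auto
  then have "cf (fst (GG \<zeta> w)) (sg \<zeta>) = fst w + snd w" "cf (snd (GG \<zeta> w)) (sg (-\<zeta>)) = fst w - snd w"
    unfolding GG_def by (simp_all add: cf_inv)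
  then show ?thesis unfolding Phi_def by (simp add: prod_eq_iff field_simps)
qed

lemma Nn_inv: "Nn (inv\<tau> \<tau> c) = \<bar>Re c - Im c * Re \<tau> / Im \<tau>\<bar> + \<bar>2 * Im c / Im \<tau>\<bar>"
  by (simp add: Nn_def Re_inv Im_inv)

lemma open_slice: assumes "cmod \<zeta> < 1" shows "open {w. GG \<zeta> w \<in> PP e}"
proof -
  have "Im (sg \<zeta>) \<noteq> 0" "Im (sg (-\<zeta>)) \<noteq> 0" using sg_nonreal assms by auto
  then show ?thesis unfolding PP_def GG_def mem_Collect_eq fst_conv snd_conv Nn_inv
    by (intro open_Collect_conj open_Collect_less continuous_intros) auto
qed

lemma sg_minus_props:
  "continuous_on (cball 0 1) (\<lambda>\<zeta>. sg (-\<zeta>))"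
  "\<And>\<zeta>. \<zeta> \<in> cball 0 1 \<Longrightarrow> cmod (sg (-\<zeta>)) \<le> 2"
  "\<And>\<zeta>. \<zeta> \<in> ball 0 1 \<Longrightarrow> Im (sg (-\<zeta>)) \<noteq> 0"
proof -
  show "continuous_on (cball 0 1) (\<lambda>\<zeta>. sg (-\<zeta>))"
    by (rule continuous_on_compose2[OF sg_cont]) (auto intro!: continuous_intros)
qed (auto intro!: sg_bound sg_nonreal)

lemma V_open: assumes "e > 0" shows "open (\<Union>p\<in>PP e. Phi p ` cball 0 1)" (is "open ?V")
proof (subst open_subopen, intro ballI)
  fix w assume "w \<in> ?V"
  then obtain p z where p: "p \<in> PP e" and z: "z \<in> cball 0 1" and w: "w = Phi p z" by auto
  have ev1: "eventually (\<lambda>r. \<exists>q'. Nn q' < e \<and> cf q' (sg (of_real r * z)) = cf (fst p) (sg z)) (at_left 1)"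
    using p z by (intro comp_reduce sg_cont sg_bound sg_nonreal) (auto simp: PP_def)
  have ev2: "eventually (\<lambda>r. \<exists>q'. Nn q' < e \<and> cf q' (sg (- (of_real r * z))) = cf (snd p) (sg (-z))) (at_left 1)"
    using p z comp_reduce[OF sg_minus_props, of z "snd p" e] by (auto simp: PP_def)
  have ev3: "eventually (\<lambda>r::real. 0 < r \<and> r < 1) (at_left 1)"
    using eventually_at_left_real[of 0 "1::real"] by simp
  from eventually_happens'[OF trivial_limit_at_left_real eventually_conj[OF ev1 eventually_conj[OF ev2 ev3]]]
  obtain r q1 q2 where r: "0 < r" "r < 1" and q1: "Nn q1 < e" "cf q1 (sg (of_real r * z)) = cf (fst p) (sg z)"
    and q2: "Nn q2 < e" "cf q2 (sg (- (of_real r * z))) = cf (snd p) (sg (-z))" by blast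
  define z' where "z' = of_real r * z"
  have "r * cmod z \<le> r * 1" using z r by (intro mult_left_mono) auto
  then have "r * cmod z < 1" using r by linarith
  then have z'b: "cmod z' < 1" using r by (simp add: z'_def norm_mult)
  have pe: "Phi (q1, q2) z' = w" unfolding w Phi_def z'_def using q1 q2 by simp
  have pP: "(q1, q2) \<in> PP e" using q1 q2 by (simp add: PP_def)
  show "\<exists>T. open T \<and> w \<in> T \<and> T \<subseteq> ?V"
  proof (intro exI conjI)
    show "open {w. GG z' w \<in> PP e}" using z'b by (rule open_slice)
    show "w \<in> {w. GG z' w \<in> PP e}" using GG_Phi[OF z'b, of "(q1,q2)"] pe pP by simp
    show "{w. GG z' w \<in> PP e} \<subseteq> ?V"
    proof
      fix w' assume "w' \<in> {w. GG z' w \<in> PP e}"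
      moreover have "w' = Phi (GG z' w') z'" using Phi_GG[OF z'b] by simp
      moreover have "z' \<in> cball 0 1" using z'b by simp
      ultimately show "w' \<in> ?V" by blast
    qed
  qed
qed

lemma part1: "Fmap -` Gamma = Pi1 \<union> Pi2"
proof (rule set_eqI)
  fix w :: "complex \<times> complex"
  have "(csqrt ((snd w)\<^sup>2))\<^sup>2 = (snd w)\<^sup>2" by simp
  then have "csqrt ((snd w)\<^sup>2) = snd w \<or> csqrt ((snd w)\<^sup>2) = - snd w"
    by (simp only: power2_eq_iff)
  then show "w \<in> Fmap -` Gamma \<longleftrightarrow> w \<in> Pi1 \<union> Pi2"
  proof (elim disjE)
    assume h: "csqrt ((snd w)\<^sup>2) = snd w"
    show ?thesis
      by (simp only: Fmap_def Gamma_def Pi1_def Pi2_def vimage_def mem_Collect_eq Un_iff fst_conv snd_conv h)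
  next
    assume h: "csqrt ((snd w)\<^sup>2) = - snd w"
    show ?thesis
      by (simp only: Fmap_def Gamma_def Pi1_def Pi2_def vimage_def mem_Collect_eq Un_iff fst_conv snd_conv h)
        (auto simp del: csqrt.sel)
  qed
qed

lemma PP_convex: "convex (PP e)"
proof (unfold convex_def, intro ballI allI impI)
  fix x y :: "complex \<times> complex" and u v :: real
  assume x: "x \<in> PP e" and y: "y \<in> PP e" and uv: "0 \<le> u" "0 \<le> v" "u + v = 1"
  have key: "Nn (u *\<^sub>R a + v *\<^sub>R b) < e" if "Nn a < e" "Nn b < e" for a b :: complex
  proof -
    have "Nn (u *\<^sub>R a + v *\<^sub>R b) = \<bar>u * Re a + v * Re b\<bar> + \<bar>u * Im a + v * Im b\<bar>"
      by (simp add: Nn_def)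
    also have "\<dots> \<le> (u * \<bar>Re a\<bar> + v * \<bar>Re b\<bar>) + (u * \<bar>Im a\<bar> + v * \<bar>Im b\<bar>)"
      using uv by (intro add_mono) (auto intro!: order.trans[OF abs_triangle_ineq] simp: abs_mult)
    also have "\<dots> = u * Nn a + v * Nn b" by (simp add: Nn_def algebra_simps)
    also have "\<dots> < e"
    proof -
      have "u * Nn a \<le> u * e" "v * Nn b \<le> v * e" using that uv by (auto intro: mult_left_mono)
      moreover have "u * Nn a < u * e \<or> v * Nn b < v * e"
      proof (cases "u > 0")
        case True then show ?thesis using that by simp
      next
        case False then have "v = 1" using uv by simp
        then show ?thesis using that by simp
      qed
      ultimately have "u * Nn a + v * Nn b < u * e + v * e" by linarith
      also have "\<dots> = e * (u + v)" by (simp add: algebra_simps)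
      also have "\<dots> = e" using uv by simp
      finally show ?thesis .
    qed
    finally show ?thesis .
  qed
  show "u *\<^sub>R x + v *\<^sub>R y \<in> PP e"
    using x y by (auto simp: PP_def intro!: key)
qed

lemma sg_comp_cont: "continuous_on S f \<Longrightarrow> f ` S \<subseteq> cball 0 1 \<Longrightarrow> continuous_on S (\<lambda>x. sg (f x))"
  by (rule continuous_on_compose2[OF sg_cont])

lemma sg_comp_holo: "f holomorphic_on S \<Longrightarrow> f ` S \<subseteq> ball 0 1 \<Longrightarrow> (\<lambda>x. sg (f x)) holomorphic_on S"
  using holomorphic_on_compose_gen[OF _ sg_holo, of f S] by (simp add: o_def)

lemma Phi_cont: "continuous_on (P \<times> cball 0 1) (\<lambda>(p, \<zeta>). Phi p \<zeta>)"
proof -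
  have a: "continuous_on (P \<times> cball 0 1) (\<lambda>x::(complex\<times>complex)\<times>complex. sg (snd x))"
    by (rule sg_comp_cont) (auto intro!: continuous_intros)
  have b: "continuous_on (P \<times> cball 0 1) (\<lambda>x::(complex\<times>complex)\<times>complex. sg (- snd x))"
    by (rule sg_comp_cont) (auto intro!: continuous_intros)
  show ?thesis unfolding case_prod_unfold Phi_def cf_def
    by (intro continuous_intros a b) auto
qed

lemma Phi_disc: "holo_disc (Phi p)"
proof -
  have c: "continuous_on (cball 0 1) (\<lambda>\<zeta>. Phi p \<zeta>)"
  proof -
    have "continuous_on (cball 0 1) (\<lambda>\<zeta>. (\<lambda>(p, \<zeta>). Phi p \<zeta>) (p, \<zeta>))"
      by (rule continuous_on_compose2[OF Phi_cont[of "{p}"]]) (auto intro!: continuous_intros)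
    then show ?thesis by simp
  qed
  have h1: "sg holomorphic_on ball 0 1" by (rule sg_holo)
  have h2: "(\<lambda>\<zeta>. sg (-\<zeta>)) holomorphic_on ball 0 1"
    by (rule sg_comp_holo) (auto intro!: holomorphic_intros)
  show ?thesis unfolding holo_disc_def
  proof (intro conjI)
    show "continuous_on (cball 0 1) (Phi p)" using c by simp
    show "(\<lambda>z. fst (Phi p z)) holomorphic_on ball 0 1" unfolding Phi_def fst_conv cf_def
      by (intro holomorphic_intros h1 h2) auto
    show "(\<lambda>z. snd (Phi p z)) holomorphic_on ball 0 1" unfolding Phi_def snd_conv cf_def
      by (intro holomorphic_intros h1 h2) auto
  qed
qed

lemma Phi_boundary: assumes "cmod z = 1" shows "Phi p z \<in> Pi1 \<union> Pi2"
proof (cases "Im z \<ge> 0")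
  case True
  then have "Im (sg z) = 0" using sg_real assms by blast
  then have "Im (fst (Phi p z) + snd (Phi p z)) = 0" using Phi_sum[of p z] by (simp only: Im_cf)
  then show ?thesis unfolding Pi1_def by simp
next
  case False
  then have "Im (sg (-z)) = 0" using sg_real[of "-z"] assms by simp
  then have "Im (fst (Phi p z) - snd (Phi p z)) = 0" using Phi_diff[of p z] by (simp only: Im_cf)
  then show ?thesis unfolding Pi2_def by simp
qed

lemma Phi_bound: assumes "p \<in> PP e" "z \<in> cball 0 1" shows "norm (Phi p z) < 2 * e"
proof -
  have s: "cmod (cf (fst p) (sg z)) < e" "cmod (cf (snd p) (sg (-z))) < e"
    using assms cf_bound[of "sg z" "fst p"] cf_bound[of "sg (-z)" "snd p"] sg_bound[of z] sg_bound[of "-z"]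
    by (auto simp: PP_def)
  have "norm (Phi p z) \<le> cmod (fst (Phi p z)) + cmod (snd (Phi p z))"
    using norm_Pair_le[of "fst (Phi p z)" "snd (Phi p z)"] by simp
  also have "\<dots> \<le> (cmod (cf (fst p) (sg z)) + cmod (cf (snd p) (sg (-z)))) / 2
                 + (cmod (cf (fst p) (sg z)) + cmod (cf (snd p) (sg (-z)))) / 2"
    unfolding Phi_def fst_conv snd_conv
    using norm_triangle_ineq[of "cf (fst p) (sg z)" "cf (snd p) (sg (-z))"]
          norm_triangle_ineq4[of "cf (fst p) (sg z)" "cf (snd p) (sg (-z))"]
    by (simp add: norm_divide)
  also have "\<dots> < 2 * e" using s by simp
  finally show ?thesis .
qed

theorem mainTheorem9:
  shows "Fmap -` Gamma = Pi1 \<union> Pi2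
    \<and> (\<forall>U. open U \<and> (0 :: complex \<times> complex) \<in> U \<longrightarrow>
          (\<exists>V. open V \<and> 0 \<in> V \<and> V \<subseteq> U \<and> filled_by_contracting_discs V (Pi1 \<union> Pi2)))"
proof (intro conjI allI impI)
  show "Fmap -` Gamma = Pi1 \<union> Pi2" by (rule part1)
  fix U :: "(complex \<times> complex) set"
  assume U: "open U \<and> 0 \<in> U"
  then obtain d where d: "d > 0" "ball 0 d \<subseteq> U" by (meson openE)
  define e where "e = d / 2"
  have e: "e > 0" using d by (simp add: e_def)
  define V where "V = (\<Union>p\<in>PP e. Phi p ` cball 0 1)"
  have p0: "(0::complex\<times>complex) \<in> PP e" using e by (simp add: PP_def Nn_def)
  have phi0: "Phi 0 \<zeta> = 0" for \<zeta> by (simp add: Phi_def zero_prod_def)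
  show "\<exists>V. open V \<and> 0 \<in> V \<and> V \<subseteq> U \<and> filled_by_contracting_discs V (Pi1 \<union> Pi2)"
  proof (intro exI conjI)
    show "open V" unfolding V_def using e by (rule V_open)
    show "0 \<in> V" unfolding V_def using p0 phi0[of 0] by force
    show "V \<subseteq> U"
    proof
      fix w assume "w \<in> V"
      then obtain p z where pz: "p \<in> PP e" "z \<in> cball 0 1" "w = Phi p z" unfolding V_def by auto
      then have "norm w < 2 * e" using Phi_bound[OF pz(1,2)] by simp
      then have "norm w < d" by (simp add: e_def)
      then show "w \<in> U" using d by auto
    qed
    show "filled_by_contracting_discs V (Pi1 \<union> Pi2)"
      unfolding filled_by_contracting_discs_def
    proof (intro exI conjI ballI)
      show "path_connected (PP e)" by (rule convex_imp_path_connected[OF PP_convex])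
      show "0 \<in> PP e" by (rule p0)
      show "continuous_on (PP e \<times> cball 0 1) (\<lambda>(p, \<zeta>). Phi p \<zeta>)" by (rule Phi_cont)
      show "holo_disc (Phi p)" for p by (rule Phi_disc)
      show "Phi p ` sphere 0 1 \<subseteq> Pi1 \<union> Pi2" for p
      proof
        fix w assume "w \<in> Phi p ` sphere 0 1"
        then obtain z where "cmod z = 1" "w = Phi p z" by auto
        then show "w \<in> Pi1 \<union> Pi2" using Phi_boundary by blast
      qed
      show "Phi 0 \<zeta> = 0" for \<zeta> by (rule phi0)
      show "V = (\<Union>p\<in>PP e. Phi p ` cball 0 1)" by (rule V_def)
    qed
  qed
qed

end
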